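(* Let $(X,f)$ be a dynamical system. The following are equivalent: (1) $(X,f)$ is multi-transitive; (2) $(X,f)$ is $\mathcal{F}[\infty]$-transitive; (3) $(X,f)$ is $\nabla(\mathcal{F}[\infty])$-point transitive.
   Context: A dynamical system is a pair $(X,f)$ with $X$ a compact metric space and $f:X\to X$ continuous. $\mathbb{N}=\{1,2,\dots\}$, $\mathbb{Z}_+=\{0,1,2,\dots\}$. $N(U,V)=\{n\in\mathbb{N}: U\cap f^{-n}(V)\neq\emptyset\}$, $N(x,U)=\{n\in\mathbb{N}: f^n(x)\in U\}$. $(X,f)$ is transitive if $N(U,V)\neq\emptyset$ for all non-empty open $U,V$. For a family $\mathcal{F}$ of subsets of $\mathbb{N}$: $(X,f)$ is $\mathcal{F}$-transitive if $N(U,V)\in\mathcal{F}$ for all non-empty open $U,V$; $x$ is an $\mathcal{F}$-transitive point if $N(x,U)\in\mathcal{F}$ for every non-empty open $U$, and $(X,f)$ is $\mathcal{F}$-point transitive if such a point exists. For $F\subset\mathbb{N}$, $F-F=\{a-b:a,b\in F,\ a>b\}$ and $\nabla(\mathcal{F})=\{F\subset\mathbb{N}: F-F\in\mathcal{F}\}$. $(X,f)$ is multi-transitive if for every $n\in\mathbb{N}$ the system $(X^n,f\times f^2\times\dots\times f^n)$ is transitive. For $\mathbf{a}\in\mathbb{N}^r$, $\mathcal{F}[\mathbf{a}]$ is the collection of all $F\subset\mathbb{N}$ such that for every $(n_1,\dots,n_r)\in\mathbb{Z}_+^r$ there is $k\in\mathbb{N}$ with $ka_i+n_i\in F$ for all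 $i$; and $\mathcal{F}[\infty]=\bigcap_{i=1}^\infty\mathcal{F}[(1,2,\dots,i)]$. *)

theory Defs
  imports "HOL-Analysis.Analysis"
begin

text \<open>Return-time sets. Natural numbers \<open>\<nat> = {1,2,...}\<close> are modelled as positive nats.\<close>

definition hitset :: "'a topology \<Rightarrow> ('a \<Rightarrow> 'a) \<Rightarrow> 'a set \<Rightarrow> 'a set \<Rightarrow> nat set" where
  "hitset T g U V = {n. n > 0 \<and> U \<inter> (g ^^ n) -` V \<noteq> {}}"

definition visitset :: "('a \<Rightarrow> 'a) \<Rightarrow> 'a \<Rightarrow> 'a set \<Rightarrow> nat set" where
  "visitset g x U = {n. n > 0 \<and> (g ^^ n) x \<in> U}"

definition transitive_sys :: "'a topology \<Rightarrow> ('a \<Rightarrow> 'a) \<Rightarrow> bool" where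
  "transitive_sys T g \<longleftrightarrow>
     (\<forall>U V. openin T U \<and> U \<noteq> {} \<and> openin T V \<and> V \<noteq> {} \<longrightarrow> hitset T g U V \<noteq> {})"

definition fam_transitive :: "nat set set \<Rightarrow> 'a topology \<Rightarrow> ('a \<Rightarrow> 'a) \<Rightarrow> bool" where
  "fam_transitive Fam T g \<longleftrightarrow>
     (\<forall>U V. openin T U \<and> U \<noteq> {} \<and> openin T V \<and> V \<noteq> {} \<longrightarrow> hitset T g U V \<in> Fam)"

definition fam_point_transitive :: "nat set set \<Rightarrow> 'a topology \<Rightarrow> ('a \<Rightarrow> 'a) \<Rightarrow> bool" where
  "fam_point_transitive Fam T g \<longleftrightarrow>
     (\<exists>x \<in> topspace T. \<forall>U. openin T U \<and> U \<noteq> {} \<longrightarrow> visitset g x U \<in> Fam)"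

text \<open>Multi-transitivity: \<open>(X^n, f \<times> f^2 \<times> ... \<times> f^n)\<close> transitive for all n \<ge> 1;
  X^n is the product topology on functions {0..<n} \<rightarrow> X, coordinate i carries f^(i+1).\<close>
definition multi_transitive :: "'a topology \<Rightarrow> ('a \<Rightarrow> 'a) \<Rightarrow> bool" where
  "multi_transitive T f \<longleftrightarrow>
     (\<forall>n::nat. n \<ge> 1 \<longrightarrow>
        transitive_sys (product_topology (\<lambda>i. T) {..<n})
          (\<lambda>x. restrict (\<lambda>i. (f ^^ Suc i) (x i)) {..<n}))"

definition diffset :: "nat set \<Rightarrow> nat set" where
  "diffset F = {a - b | a b. a \<in> F \<and> b \<in> F \<and> a > b}"

definition nabla :: "nat set set \<Rightarrow> nat set set" where
  "nabla Fam = {F. diffset F \<in> Fam}"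

definition Fvec :: "nat list \<Rightarrow> nat set set" where
  "Fvec a = {F. \<forall>ns::nat list. length ns = length a \<longrightarrow>
                 (\<exists>k>0. \<forall>i < length a. k * a ! i + ns ! i \<in> F)}"

definition Finf :: "nat set set" where
  "Finf = (\<Inter>i\<in>{1..}. Fvec [1..<Suc i])"

end

theory Submission
  imports Defs
begin
lemma Finf_iff: "F \<in> Finf \<longleftrightarrow> (\<forall>ns. \<exists>k>0. \<forall>i<length ns. k * Suc i + ns ! i \<in> F)"
proof
  assume F: "F \<in> Finf"
  show "\<forall>ns. \<exists>k>0. \<forall>i<length ns. k * Suc i + ns ! i \<in> F"
  proof
    fix ns :: "nat list"
    show "\<exists>k>0. \<forall>i<length ns. k * Suc i + ns ! i \<in> F"
    proof (cases "ns = []")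
      case True then show ?thesis by (intro exI[of _ 1]) auto
    next
      case False
      then have "length ns \<in> {1..}" by (cases ns) auto
      with F have "F \<in> Fvec [1..<Suc (length ns)]" unfolding Finf_def by blast
      then obtain k where "k>0" "\<forall>i<length ns. k * ([1..<Suc (length ns)] ! i) + ns ! i \<in> F"
        unfolding Fvec_def by (auto simp del: upt_Suc)
      then show ?thesis by (intro exI[of _ k]) (auto simp del: upt_Suc)
    qed
  qed
next
  assume H: "\<forall>ns. \<exists>k>0. \<forall>i<length ns. k * Suc i + ns ! i \<in> F"
  show "F \<in> Finf" unfolding Finf_def Fvec_def
  proof (intro INT_I CollectI allI impI)
    fix i and ns :: "nat list" assume "i \<in> {1..}" "length ns = length [1..<Suc i]"
    then have len: "length ns = i" by simp
    from H obtain k where "k>0" "\<forall>j<length ns. k * Suc j + ns ! j \<in> F" by blast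
    with len show "\<exists>k>0. \<forall>ia<length [1..<Suc i]. k * [1..<Suc i] ! ia + ns ! ia \<in> F"
      by (intro exI[of _ k]) (auto simp del: upt_Suc)
  qed
qed

lemma Finf_iff_fun: "F \<in> Finf \<longleftrightarrow> (\<forall>r (n::nat\<Rightarrow>nat). \<exists>k>0. \<forall>i<r. k * Suc i + n i \<in> F)"
proof
  assume F: "F \<in> Finf"
  show "\<forall>r (n::nat\<Rightarrow>nat). \<exists>k>0. \<forall>i<r. k * Suc i + n i \<in> F"
  proof (intro allI)
    fix r and n :: "nat \<Rightarrow> nat"
    from F[unfolded Finf_iff, THEN spec, of "map n [0..<r]"] obtain k where "k>0" "\<forall>i<length (map n [0..<r]). k * Suc i + map n [0..<r] ! i \<in> F"
      by blast
    then show "\<exists>k>0. \<forall>i<r. k * Suc i + n i \<in> F" by auto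
  qed
next
  assume H: "\<forall>r (n::nat\<Rightarrow>nat). \<exists>k>0. \<forall>i<r. k * Suc i + n i \<in> F"
  show "F \<in> Finf" unfolding Finf_iff
  proof
    fix ns :: "nat list"
    show "\<exists>k>0. \<forall>i<length ns. k * Suc i + ns ! i \<in> F"
      using H[THEN spec, THEN spec, of "length ns" "\<lambda>i. ns ! i"] .
  qed
qed

lemma Finf_unbounded: "F \<in> Finf \<Longrightarrow> \<exists>p\<in>F. p \<ge> m"
proof -
  assume "F \<in> Finf"
  from this[unfolded Finf_iff_fun, THEN spec, THEN spec, of 1 "\<lambda>_. m"]
  obtain k where "k>0" "\<forall>i<1. k * Suc i + (\<lambda>_. m) i \<in> F"
    by blast
  then show ?thesis by (intro bexI[of _ "k+m"]) auto
qed

lemma Finf_shift: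
  assumes "F \<in> Finf" "\<And>a. a \<in> F \<Longrightarrow> a + p \<in> G"
  shows "G \<in> Finf"
  unfolding Finf_iff_fun
proof (intro allI)
  fix r and n :: "nat \<Rightarrow> nat"
  from assms(1)[unfolded Finf_iff_fun, THEN spec, THEN spec, of r "\<lambda>i. n i + p * i"]
  obtain k where k: "k>0" "\<forall>i<r. k * Suc i + (n i + p * i) \<in> F"
    by blast
  have "\<forall>i<r. (k + p) * Suc i + n i \<in> G"
  proof (intro allI impI)
    fix i assume "i < r"
    with k assms(2) have m: "k * Suc i + (n i + p * i) + p \<in> G" by blast
    have eq: "k * Suc i + (n i + p * i) + p = (k + p) * Suc i + n i" by (simp add: algebra_simps)
    show "(k + p) * Suc i + n i \<in> G" using m unfolding eq .
  qed
  with k show "\<exists>k>0. \<forall>i<r. k * Suc i + n i \<in> G" by (intro exI[of _ "k+p"]) auto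
qed

lemma Finf_mono: "F \<in> Finf \<Longrightarrow> F \<subseteq> G \<Longrightarrow> G \<in> Finf"
  using Finf_shift[of F 0 G] by auto

lemma funpow_comp_apply: "(f ^^ a) ((f ^^ b) x) = (f ^^ (a + b)) x"
  by (simp add: funpow_add)

locale dsys =
  fixes X :: "'a::metric_space set" and f :: "'a \<Rightarrow> 'a"
  assumes cont: "continuous_on X f" and inv: "f ` X \<subseteq> X"
begin

abbreviation "op A \<equiv> openin (top_of_set X) A"

lemma iter_in: "x \<in> X \<Longrightarrow> (f ^^ n) x \<in> X"
  using inv by (induction n) auto

lemma iter_img: "(f ^^ n) ` X \<subseteq> X"
  using iter_in by blast

lemma cont_iter: "continuous_on X (f ^^ n)"
proof (induction n)
  case 0 then show ?case by (simp add: continuous_on_id)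
next
  case (Suc n)
  have "continuous_on ((f ^^ n) ` X) f" using cont iter_img continuous_on_subset by blast
  with Suc have "continuous_on X (f \<circ> (f ^^ n))" by (rule continuous_on_compose)
  then show ?case by simp
qed

lemma pre_open: "op A \<Longrightarrow> op (X \<inter> (f ^^ n) -` A)"
  using continuous_openin_preimage[OF cont_iter] iter_in by blast

lemma op_sub: "op A \<Longrightarrow> A \<subseteq> X"
  using openin_imp_subset by blast

lemma pre_open2: "op U \<Longrightarrow> op A \<Longrightarrow> op (U \<inter> (f ^^ n) -` A)"
proof -
  assume U: "op U" and A: "op A"
  have "U \<inter> (f ^^ n) -` A = U \<inter> (X \<inter> (f ^^ n) -` A)" using op_sub[OF U] by blast
  then show ?thesis using openin_Int[OF U pre_open[OF A]] by simp
qed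

definition T0 where
  "T0 \<longleftrightarrow> (\<forall>U V. op U \<and> U \<noteq> {} \<and> op V \<and> V \<noteq> {} \<longrightarrow> (\<exists>k>0. U \<inter> (f ^^ k) -` V \<noteq> {}))"

definition HH where
  "HH \<longleftrightarrow> (\<forall>U V m. op U \<and> U \<noteq> {} \<and> op V \<and> V \<noteq> {} \<longrightarrow> (\<exists>p\<ge>m. U \<inter> (f ^^ p) -` V \<noteq> {}))"

lemma T0D: "T0 \<Longrightarrow> op U \<Longrightarrow> U \<noteq> {} \<Longrightarrow> op V \<Longrightarrow> V \<noteq> {} \<Longrightarrow> \<exists>k>0. U \<inter> (f ^^ k) -` V \<noteq> {}"
  unfolding T0_def by blast

lemma HHD: "HH \<Longrightarrow> op U \<Longrightarrow> U \<noteq> {} \<Longrightarrow> op V \<Longrightarrow> V \<noteq> {} \<Longrightarrow> \<exists>p\<ge>m. U \<inter> (f ^^ p) -` V \<noteq> {}"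
  unfolding HH_def by blast

lemma T0_pre_nonempty:
  assumes "T0" "op A" "A \<noteq> {}"
  shows "X \<inter> (f ^^ n) -` A \<noteq> {}"
proof (induction n)
  case 0 then show ?case using op_sub[OF assms(2)] assms(3) by auto
next
  case (Suc n)
  have "X \<noteq> {}" using op_sub[OF assms(2)] assms(3) by auto
  have B: "op (X \<inter> (f ^^ n) -` A)" by (rule pre_open[OF assms(2)])
  have "op X" by (rule openin_subtopology_self)
  have "\<exists>k>0. X \<inter> (f ^^ k) -` (X \<inter> (f ^^ n) -` A) \<noteq> {}"
    by (rule T0D[OF assms(1) \<open>op X\<close> \<open>X \<noteq> {}\<close> B Suc])
  then obtain k x where
    k: "k>0" "x \<in> X" "(f ^^ k) x \<in> X \<inter> (f ^^ n) -` A"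
    by blast
  obtain j where j: "k = Suc j" using k(1) gr0_implies_Suc by blast
  have "(f ^^ Suc n) ((f ^^ j) x) = (f ^^ n) ((f ^^ k) x)"
    unfolding funpow_comp_apply j by simp
  then have "(f ^^ Suc n) ((f ^^ j) x) \<in> A" using k(3) by simp
  moreover have "(f ^^ j) x \<in> X" using iter_in k(2) by blast
  ultimately show ?case by blast
qed

lemma T0_HH: "T0 \<Longrightarrow> HH"
  unfolding HH_def
proof (intro allI impI)
  fix U V m assume T: "T0" and UV: "op U \<and> U \<noteq> {} \<and> op V \<and> V \<noteq> {}"
  then have "op (X \<inter> (f ^^ m) -` V)" "X \<inter> (f ^^ m) -` V \<noteq> {}"
    using pre_open T0_pre_nonempty by blast+
  with T UV obtain k where "k>0" "U \<inter> (f ^^ k) -` (X \<inter> (f ^^ m) -` V) \<noteq> {}"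
    using T0D by meson
  then obtain x where "x \<in> U" "(f ^^ m) ((f ^^ k) x) \<in> V" by blast
  then have "x \<in> U \<inter> (f ^^ (m + k)) -` V" by (simp add: funpow_comp_apply)
  then show "\<exists>p\<ge>m. U \<inter> (f ^^ p) -` V \<noteq> {}" by (intro exI[of _ "m+k"]) auto
qed

lemma chain:
  fixes r :: nat
  assumes "HH" "op Om" "Om \<noteq> {}" "\<forall>i<r. op (A i) \<and> A i \<noteq> {}"
  shows "\<exists>W p. op W \<and> W \<noteq> {} \<and> W \<subseteq> Om \<and> (\<forall>i<r. b i \<le> p i \<and> W \<subseteq> (f ^^ p i) -` A i)"
  using assms(4)
proof (induction r)
  case 0 then show ?case using assms(2,3) by (intro exI[of _ Om]) auto
next
  case (Suc r)
  have "\<forall>i<r. op (A i) \<and> A i \<noteq> {}" using Suc.prems by simp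
  from Suc.IH[OF this] obtain W p where W: "op W" "W \<noteq> {}" "W \<subseteq> Om" "\<forall>i<r. b i \<le> p i \<and> W \<subseteq> (f ^^ p i) -` A i"
    by blast
  from Suc.prems have Ar: "op (A r)" "A r \<noteq> {}" by auto
  obtain q where q: "q \<ge> b r" "W \<inter> (f ^^ q) -` A r \<noteq> {}"
    using HHD[OF assms(1) W(1) W(2) Ar] by blast
  let ?W = "W \<inter> (f ^^ q) -` A r"
  have "op ?W" using pre_open2[OF W(1) Ar(1)] .
  moreover have "\<forall>i<Suc r. b i \<le> (p(r := q)) i \<and> ?W \<subseteq> (f ^^ (p(r := q)) i) -` A i"
    using W(4) q(1) by (auto simp: less_Suc_eq)
  moreover have "?W \<subseteq> Om" using W(3) by blast
  ultimately show ?case using q(2) by (intro exI[of _ ?W] exI[of _ "p(r := q)"]) simp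
qed

end

lemma iterg:
  fixes f :: "'a \<Rightarrow> 'a"
  shows "x \<in> extensional I \<Longrightarrow>
   ((\<lambda>x. restrict (\<lambda>i. (f ^^ Suc i) (x i)) I) ^^ k) x = restrict (\<lambda>i. (f ^^ (k * Suc i)) (x i)) I"
proof (induction k)
  case 0 then show ?case by (auto simp: restrict_def extensional_def fun_eq_iff)
next
  case (Suc k)
  let ?g = "\<lambda>x. restrict (\<lambda>i. (f ^^ Suc i) (x i)) I"
  have "(?g ^^ Suc k) x = ?g ((?g ^^ k) x)" by simp
  also have "\<dots> = ?g (restrict (\<lambda>i. (f ^^ (k * Suc i)) (x i)) I)"
    using Suc.IH[OF Suc.prems] by (rule arg_cong)
  also have "\<dots> = restrict (\<lambda>i. (f ^^ (Suc k * Suc i)) (x i)) I"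
    by (rule ext) (simp add: funpow_comp_apply algebra_simps)
  finally show ?case .
qed

context dsys begin

definition MT where
  "MT \<longleftrightarrow> (\<forall>r\<ge>1. \<forall>U V :: nat \<Rightarrow> 'a set.
      (\<forall>i<r. op (U i) \<and> U i \<noteq> {} \<and> op (V i) \<and> V i \<noteq> {}) \<longrightarrow>
      (\<exists>k>0. \<forall>i<r. \<exists>x\<in>U i. (f ^^ (k * Suc i)) x \<in> V i))"

lemma multi_MT: "multi_transitive (top_of_set X) f \<Longrightarrow> MT"
  unfolding MT_def
proof (intro allI impI)
  fix r :: nat and U V :: "nat \<Rightarrow> 'a set"
  assume M: "multi_transitive (top_of_set X) f" and r: "r \<ge> 1"
    and UV: "\<forall>i<r. op (U i) \<and> U i \<noteq> {} \<and> op (V i) \<and> V i \<noteq> {}"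
  let ?P = "product_topology (\<lambda>i. top_of_set X) {..<r}"
  let ?g = "\<lambda>x. restrict (\<lambda>i. (f ^^ Suc i) (x i)) {..<r}"
  have T: "transitive_sys ?P ?g" using M r unfolding multi_transitive_def by blast
  have oU: "openin ?P (PiE {..<r} U)" using UV by (simp add: openin_PiE_gen)
  have oV: "openin ?P (PiE {..<r} V)" using UV by (simp add: openin_PiE_gen)
  have nU: "PiE {..<r} U \<noteq> {}" using UV by (simp add: PiE_eq_empty_iff)
  have nV: "PiE {..<r} V \<noteq> {}" using UV by (simp add: PiE_eq_empty_iff)
  have "hitset ?P ?g (PiE {..<r} U) (PiE {..<r} V) \<noteq> {}"
    using T oU oV nU nV unfolding transitive_sys_def by blast
  then obtain k z where k: "k > 0" "z \<in> PiE {..<r} U" "(?g ^^ k) z \<in> PiE {..<r} V"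
    unfolding hitset_def by blast
  have "(?g ^^ k) z = restrict (\<lambda>i. (f ^^ (k * Suc i)) (z i)) {..<r}"
    using k(2) by (intro iterg) (auto simp: PiE_def)
  note eq = this
  have zU: "\<forall>i<r. z i \<in> U i" using k(2) by (simp add: PiE_iff)
  have zV: "\<forall>i<r. (f ^^ (k * Suc i)) (z i) \<in> V i" using k(3) unfolding eq by (simp add: PiE_iff)
  show "\<exists>k>0. \<forall>i<r. \<exists>x\<in>U i. (f ^^ (k * Suc i)) x \<in> V i"
  proof (intro exI[of _ k] conjI allI impI)
    fix i assume "i < r"
    then show "\<exists>x\<in>U i. (f ^^ (k * Suc i)) x \<in> V i" using zU zV by blast
  qed (rule k(1))
qed

lemma box:
  assumes "openin (product_topology (\<lambda>i. top_of_set X) {..<n}) U" "u \<in> U"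
  obtains B where "\<forall>i<n. op (B i) \<and> B i \<noteq> {}" "PiE {..<n} B \<subseteq> U"
proof -
  from assms(1)[unfolded openin_product_topology_alt, THEN bspec, OF assms(2)]
  obtain B where B: "\<forall>i\<in>{..<n}. op (B i)" "u \<in> PiE {..<n} B" "PiE {..<n} B \<subseteq> U"
    by blast
  have "\<forall>i<n. op (B i) \<and> B i \<noteq> {}"
  proof (intro allI impI conjI)
    fix i assume "i < n"
    then show "op (B i)" using B(1) by simp
    show "B i \<noteq> {}" using B(2) \<open>i < n\<close> by (simp add: PiE_iff) blast
  qed
  then show ?thesis using B(3) that by blast
qed

lemma MT_multi: "MT \<Longrightarrow> multi_transitive (top_of_set X) f"
  unfolding multi_transitive_def transitive_sys_def
proof (intro allI impI)
  fix n :: nat and U V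
  assume M: "MT" and n: "n \<ge> 1"
  let ?P = "product_topology (\<lambda>i. top_of_set X) {..<n}"
  let ?g = "\<lambda>x. restrict (\<lambda>i. (f ^^ Suc i) (x i)) {..<n}"
  assume UV: "openin ?P U \<and> U \<noteq> {} \<and> openin ?P V \<and> V \<noteq> {}"
  then obtain u v where "u \<in> U" "v \<in> V" by blast
  obtain BU where BU: "\<forall>i<n. op (BU i) \<and> BU i \<noteq> {}" "PiE {..<n} BU \<subseteq> U"
    using box[of n U u] UV \<open>u \<in> U\<close> by blast
  obtain BV where BV: "\<forall>i<n. op (BV i) \<and> BV i \<noteq> {}" "PiE {..<n} BV \<subseteq> V"
    using box[of n V v] UV \<open>v \<in> V\<close> by blast
  have "\<forall>i<n. op (BU i) \<and> BU i \<noteq> {} \<and> op (BV i) \<and> BV i \<noteq> {}" using BU(1) BV(1) by blast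
  from M[unfolded MT_def, THEN spec[of _ n], THEN mp, OF n, THEN spec[of _ BU], THEN spec[of _ BV], THEN mp, OF this]
  obtain k where k: "k>0" "\<forall>i<n. \<exists>x\<in>BU i. (f ^^ (k * Suc i)) x \<in> BV i"
    by blast
  have "\<exists>xs. \<forall>i. i < n \<longrightarrow> xs i \<in> BU i \<and> (f ^^ (k * Suc i)) (xs i) \<in> BV i"
    by (rule choice) (use k(2) in blast)
  then obtain xs where xs: "\<forall>i<n. xs i \<in> BU i \<and> (f ^^ (k * Suc i)) (xs i) \<in> BV i"
    by blast
  let ?z = "restrict xs {..<n}"
  have "?z \<in> PiE {..<n} BU" using xs by (simp add: PiE_iff)
  then have z: "?z \<in> U" using BU(2) by blast
  have "(?g ^^ k) ?z = restrict (\<lambda>i. (f ^^ (k * Suc i)) (?z i)) {..<n}"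
    by (intro iterg) simp
  then have "(?g ^^ k) ?z \<in> PiE {..<n} BV" using xs by (simp add: PiE_iff)
  then have "(?g ^^ k) ?z \<in> V" using BV(2) by blast
  with z k(1) show "hitset ?P ?g U V \<noteq> {}" unfolding hitset_def by blast
qed

end

context dsys begin

lemma hitset_mem: "m \<in> hitset T f U V \<longleftrightarrow> m > 0 \<and> U \<inter> (f ^^ m) -` V \<noteq> {}"
  by (simp add: hitset_def)

lemma MTD:
  assumes "MT" "r \<ge> 1" "\<forall>i<r. op (U i) \<and> U i \<noteq> {} \<and> op (V i) \<and> V i \<noteq> {}"
  shows "\<exists>k>0. \<forall>i<r. \<exists>x\<in>U i. (f ^^ (k * Suc i)) x \<in> V i"
  by (rule assms(1)[unfolded MT_def, THEN spec[of _ r], THEN mp, OF assms(2),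
        THEN spec[of _ U], THEN spec[of _ V], THEN mp, OF assms(3)])

lemma MT_T0: "MT \<Longrightarrow> T0"
  unfolding T0_def
proof (intro allI impI)
  fix U V assume M: MT and UV: "op U \<and> U \<noteq> {} \<and> op V \<and> V \<noteq> {}"
  have "\<forall>i<1. op ((\<lambda>_. U) i) \<and> (\<lambda>_. U) i \<noteq> {} \<and> op ((\<lambda>_. V) i) \<and> (\<lambda>_. V) i \<noteq> {}"
    using UV by simp
  from MTD[OF M _ this] obtain k where k: "k > 0" "\<forall>i<1. \<exists>x\<in>U. (f ^^ (k * Suc i)) x \<in> V"
    by auto
  then obtain x where "x \<in> U" "(f ^^ k) x \<in> V" by auto
  then have "U \<inter> (f ^^ k) -` V \<noteq> {}" by blast
  with k(1) show "\<exists>k>0. U \<inter> (f ^^ k) -` V \<noteq> {}" by blast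
qed

lemma MT_Finf: "MT \<Longrightarrow> fam_transitive Finf (top_of_set X) f"
  unfolding fam_transitive_def
proof (intro allI impI)
  fix U V assume M: MT and UV: "op U \<and> U \<noteq> {} \<and> op V \<and> V \<noteq> {}"
  have T: T0 using MT_T0[OF M] .
  show "hitset (top_of_set X) f U V \<in> Finf"
    unfolding Finf_iff_fun
  proof (intro allI)
    fix r and n :: "nat \<Rightarrow> nat"
    show "\<exists>k>0. \<forall>i<r. k * Suc i + n i \<in> hitset (top_of_set X) f U V"
    proof (cases "r = 0")
      case True then show ?thesis by (intro exI[of _ 1]) simp
    next
      case False
      then have r: "r \<ge> 1" by simp
      let ?V = "\<lambda>i. X \<inter> (f ^^ n i) -` V"
      have "\<forall>i<r. op ((\<lambda>_. U) i) \<and> (\<lambda>_. U) i \<noteq> {} \<and> op (?V i) \<and> ?V i \<noteq> {}"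
        using UV pre_open T0_pre_nonempty[OF T] by blast
      from MTD[OF M r this] obtain k where k: "k>0" "\<forall>i<r. \<exists>x\<in>U. (f ^^ (k * Suc i)) x \<in> ?V i"
        by auto
      have "\<forall>i<r. k * Suc i + n i \<in> hitset (top_of_set X) f U V"
      proof (intro allI impI)
        fix i assume "i < r"
        with k obtain x where x: "x \<in> U" "(f ^^ n i) ((f ^^ (k * Suc i)) x) \<in> V" by blast
        then have "(f ^^ (k * Suc i + n i)) x \<in> V" by (simp add: funpow_comp_apply add.commute)
        with x(1) show "k * Suc i + n i \<in> hitset (top_of_set X) f U V"
          unfolding hitset_mem using k(1) by auto
      qed
      with k(1) show ?thesis by blast
    qed
  qed
qed

lemma FtD: "fam_transitive Fam (top_of_set X) f \<Longrightarrow> op U \<Longrightarrow> U \<noteq> {} \<Longrightarrow> op V \<Longrightarrow> V \<noteq> {}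
   \<Longrightarrow> hitset (top_of_set X) f U V \<in> Fam"
  unfolding fam_transitive_def by blast

lemma Finf_HH: "fam_transitive Finf (top_of_set X) f \<Longrightarrow> HH"
  unfolding HH_def
proof (intro allI impI)
  fix U V m assume F: "fam_transitive Finf (top_of_set X) f" and UV: "op U \<and> U \<noteq> {} \<and> op V \<and> V \<noteq> {}"
  then have "hitset (top_of_set X) f U V \<in> Finf" using FtD by blast
  from Finf_unbounded[OF this, of m] obtain p where "p \<in> hitset (top_of_set X) f U V" "p \<ge> m"
    by blast
  then show "\<exists>p\<ge>m. U \<inter> (f ^^ p) -` V \<noteq> {}" unfolding hitset_mem by blast
qed

lemma Finf_MT: "fam_transitive Finf (top_of_set X) f \<Longrightarrow> MT"
  unfolding MT_def
proof (intro allI impI)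
  fix r :: nat and U V :: "nat \<Rightarrow> 'a set"
  assume F: "fam_transitive Finf (top_of_set X) f" and r: "r \<ge> 1"
    and UV: "\<forall>i<r. op (U i) \<and> U i \<noteq> {} \<and> op (V i) \<and> V i \<noteq> {}"
  have H: HH using Finf_HH[OF F] .
  have oX: "op X" by (rule openin_subtopology_self)
  obtain i0 where "i0 < r" using r by auto
  then have "X \<noteq> {}" using UV op_sub by blast
  have "\<forall>i<r. op (V i) \<and> V i \<noteq> {}" using UV by blast
  from chain[OF H oX \<open>X \<noteq> {}\<close> this, of "\<lambda>_. 0"]
  obtain V' q where V': "op V'" "V' \<noteq> {}" "\<forall>i<r. V' \<subseteq> (f ^^ q i) -` V i" by blast
  have "\<forall>i<r. op (U i) \<and> U i \<noteq> {}" using UV by blast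
  from chain[OF H oX \<open>X \<noteq> {}\<close> this, of q]
  obtain U' p where U': "op U'" "U' \<noteq> {}" "\<forall>i<r. q i \<le> p i \<and> U' \<subseteq> (f ^^ p i) -` U i" by blast
  have "hitset (top_of_set X) f U' V' \<in> Finf" using FtD[OF F U'(1,2) V'(1,2)] .
  from this[unfolded Finf_iff_fun, THEN spec[of _ r], THEN spec[of _ "\<lambda>i. p i - q i"]]
  obtain k where k: "k > 0" "\<forall>i<r. k * Suc i + (p i - q i) \<in> hitset (top_of_set X) f U' V'"
    by blast
  have "\<forall>i<r. \<exists>x\<in>U i. (f ^^ (k * Suc i)) x \<in> V i"
  proof (intro allI impI)
    fix i assume i: "i < r"
    with k(2) obtain y where y: "y \<in> U'" "(f ^^ (k * Suc i + (p i - q i))) y \<in> V'"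
      unfolding hitset_mem by blast
    have xU: "(f ^^ p i) y \<in> U i" using U'(3) i y(1) by blast
    have "(f ^^ q i) ((f ^^ (k * Suc i + (p i - q i))) y) \<in> V i" using V'(3) i y(2) by blast
    moreover have "q i \<le> p i" using U'(3) i by blast
    then have "q i + (k * Suc i + (p i - q i)) = k * Suc i + p i" by arith
    ultimately have "(f ^^ (k * Suc i)) ((f ^^ p i) y) \<in> V i"
      by (simp add: funpow_comp_apply)
    with xU show "\<exists>x\<in>U i. (f ^^ (k * Suc i)) x \<in> V i" by blast
  qed
  with k(1) show "\<exists>k>0. \<forall>i<r. \<exists>x\<in>U i. (f ^^ (k * Suc i)) x \<in> V i" by blast
qed

end

lemma visit_mem: "n \<in> visitset g x U \<longleftrightarrow> n > 0 \<and> (g ^^ n) x \<in> U"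
  by (simp add: visitset_def)

lemma diff_mem: "a \<in> diffset F \<longleftrightarrow> (\<exists>c d. a = c - d \<and> c \<in> F \<and> d \<in> F \<and> c > d)"
  by (auto simp: diffset_def)

lemma diffset_mono: "F \<subseteq> G \<Longrightarrow> diffset F \<subseteq> diffset G"
  unfolding diffset_def by blast

lemma visitset_mono: "U \<subseteq> V \<Longrightarrow> visitset g x U \<subseteq> visitset g x V"
  unfolding visitset_def by blast

context dsys begin

lemma pt_Finf:
  assumes "fam_point_transitive (nabla Finf) (top_of_set X) f"
  shows "fam_transitive Finf (top_of_set X) f"
proof -
  from assms obtain x where x: "x \<in> X"
    and D: "\<And>U. op U \<Longrightarrow> U \<noteq> {} \<Longrightarrow> diffset (visitset f x U) \<in> Finf"
    unfolding fam_point_transitive_def nabla_def topspace_euclidean_subtopology by blast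
  show ?thesis unfolding fam_transitive_def
  proof (intro allI impI)
    fix U V assume UV: "op U \<and> U \<noteq> {} \<and> op V \<and> V \<noteq> {}"
    from Finf_unbounded[OF D[of U], of 0] UV obtain a0 where "a0 \<in> diffset (visitset f x U)" by blast
    then obtain b0 e0 where "b0 \<in> visitset f x U" unfolding diff_mem by blast
    then have b0: "(f ^^ b0) x \<in> U" unfolding visit_mem by blast
    from Finf_unbounded[OF D[of V], of "Suc b0"] UV obtain d where
      d: "d \<in> diffset (visitset f x V)" "d \<ge> Suc b0" by blast
    then obtain c e where ce: "d = c - e" "c \<in> visitset f x V" by (auto simp: diff_mem)
    have "c > b0" using ce d(2) by simp
    have cV: "(f ^^ c) x \<in> V" using ce(2) unfolding visit_mem by blast
    define p where "p = c - b0"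
    have "(f ^^ p) ((f ^^ b0) x) = (f ^^ c) x"
      unfolding funpow_comp_apply p_def using \<open>c > b0\<close> by simp
    with b0 cV have yW: "(f ^^ b0) x \<in> U \<inter> (f ^^ p) -` V" by simp
    let ?W = "U \<inter> (f ^^ p) -` V"
    have oW: "op ?W" using pre_open2 UV by blast
    have "?W \<noteq> {}" using yW by blast
    from D[OF oW this] have DW: "diffset (visitset f x ?W) \<in> Finf" .
    show "hitset (top_of_set X) f U V \<in> Finf"
    proof (rule Finf_shift[OF DW])
      fix a assume "a \<in> diffset (visitset f x ?W)"
      then obtain c' d' where cd: "a = c' - d'" "c' \<in> visitset f x ?W" "d' \<in> visitset f x ?W" "c' > d'"
        unfolding diff_mem by blast
      have z: "(f ^^ d') x \<in> U" using cd(3) unfolding visit_mem by blast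
      have c'W: "(f ^^ c') x \<in> ?W" using cd(2) unfolding visit_mem by blast
      have "(f ^^ (a + p)) ((f ^^ d') x) = (f ^^ p) ((f ^^ c') x)"
        unfolding funpow_comp_apply using cd(1,4) by (simp add: add.commute)
      with c'W have "(f ^^ (a + p)) ((f ^^ d') x) \<in> V" by simp
      moreover have "a + p > 0" using cd(1,4) by simp
      ultimately show "a + p \<in> hitset (top_of_set X) f U V"
        unfolding hitset_mem using z by blast
    qed
  qed
qed

end

lemma compact_base:
  fixes X :: "'a::metric_space set" assumes "compact X"
  obtains Bs where "countable Bs" "\<forall>B\<in>Bs. openin (top_of_set X) B \<and> B \<noteq> {}"
    "\<forall>U. openin (top_of_set X) U \<and> U \<noteq> {} \<longrightarrow> (\<exists>B\<in>Bs. B \<subseteq> U)"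
proof -
  have tb: "\<forall>\<epsilon>>0. \<exists>k. finite k \<and> k \<subseteq> X \<and> X \<subseteq> (\<Union>x\<in>k. ball x \<epsilon>)"
    using seq_compact_imp_totally_bounded compact_imp_seq_compact assms by blast
  have "\<forall>m. \<exists>k. finite k \<and> k \<subseteq> X \<and> X \<subseteq> (\<Union>c\<in>k. ball c (inverse (real (Suc m))))"
  proof
    fix m :: nat
    have "inverse (real (Suc m)) > 0" by simp
    then show "\<exists>k. finite k \<and> k \<subseteq> X \<and> X \<subseteq> (\<Union>c\<in>k. ball c (inverse (real (Suc m))))"
      using tb by blast
  qed
  then obtain K where K: "\<forall>m. finite (K m) \<and> K m \<subseteq> X \<and> X \<subseteq> (\<Union>c\<in>K m. ball c (inverse (real (Suc m))))"
    by (rule choice[THEN exE]) blast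
  define Bs where "Bs = (\<lambda>(m,c). X \<inter> ball c (inverse (real (Suc m)))) ` (SIGMA m:UNIV. K m)"
  have "countable Bs" unfolding Bs_def
    by (intro countable_image countable_SIGMA) (auto simp: K countable_finite)
  moreover have "\<forall>B\<in>Bs. openin (top_of_set X) B \<and> B \<noteq> {}"
  proof
    fix B assume "B \<in> Bs"
    then obtain m c where mc: "c \<in> K m" "B = X \<inter> ball c (inverse (real (Suc m)))"
      unfolding Bs_def by blast
    have "openin (top_of_set X) B" unfolding mc(2) by (rule openin_Int_open[OF openin_subtopology_self open_ball])
    moreover have "c \<in> B" using mc K by auto
    ultimately show "openin (top_of_set X) B \<and> B \<noteq> {}" by blast
  qed
  moreover have "\<forall>U. openin (top_of_set X) U \<and> U \<noteq> {} \<longrightarrow> (\<exists>B\<in>Bs. B \<subseteq> U)"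
  proof (intro allI impI)
    fix U assume U: "openin (top_of_set X) U \<and> U \<noteq> {}"
    then obtain y where y: "y \<in> U" by blast
    have UU: "U \<subseteq> X \<and> (\<forall>x\<in>U. \<exists>e>0. \<forall>x'\<in>X. dist x' x < e \<longrightarrow> x' \<in> U)"
      using openin_euclidean_subtopology_iff[THEN iffD1, OF conjunct1[OF U]] .
    then have "y \<in> X" using y by blast
    from UU y obtain e where e: "e > 0" "\<forall>x'\<in>X. dist x' y < e \<longrightarrow> x' \<in> U"
      by blast
    note e = e \<open>y \<in> X\<close>
    have "e / 2 > 0" using e by simp
    from real_arch_inverse[THEN iffD1, OF this]
    obtain n where n: "n \<noteq> 0" "inverse (real n) < e / 2"
      by blast
    then obtain m where m: "n = Suc m" using not0_implies_Suc by blast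
    let ?r = "inverse (real (Suc m))"
    have "X \<subseteq> (\<Union>c\<in>K m. ball c ?r)" using K by blast
    then have "y \<in> (\<Union>c\<in>K m. ball c ?r)" using e(3) by (rule subsetD)
    then obtain c where c: "c \<in> K m" "y \<in> ball c ?r" by (rule UN_E)
    let ?B = "X \<inter> ball c ?r"
    have "?B \<in> Bs" unfolding Bs_def
      by (rule image_eqI[where x="(m,c)"]) (use c(1) in auto)
    moreover have "?B \<subseteq> U"
    proof
      fix z assume z: "z \<in> ?B"
      have "dist z y \<le> dist z c + dist c y" by (rule dist_triangle)
      also have "\<dots> < ?r + ?r" using z c(2) by (simp add: dist_commute add_strict_mono)
      also have "\<dots> < e" using n m by simp
      finally show "z \<in> U" using e(2) z by blast
    qed
    ultimately show "\<exists>B\<in>Bs. B \<subseteq> U" by blast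
  qed
  ultimately show ?thesis using that by blast
qed

context dsys begin

definition GG where
  "GG U ns = {x\<in>X. \<exists>k>0. \<forall>i<length ns. \<exists>b>0. (f ^^ b) x \<in> U \<and> (f ^^ (b + k * Suc i + ns ! i)) x \<in> U}"

lemma fin_int: fixes r :: nat shows "\<forall>i<r. op (S i) \<Longrightarrow> op (X \<inter> (\<Inter>i\<in>{..<r}. S i))"
proof (induction r)
  case 0 then show ?case by (simp add: openin_subtopology_self)
next
  case (Suc r)
  have eq: "X \<inter> (\<Inter>i\<in>{..<Suc r}. S i) = (X \<inter> (\<Inter>i\<in>{..<r}. S i)) \<inter> S r"
    by (auto simp: less_Suc_eq)
  have "op (X \<inter> (\<Inter>i\<in>{..<r}. S i))" using Suc by simp
  moreover have "op (S r)" using Suc.prems by simp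
  ultimately show ?case unfolding eq by (rule openin_Int)
qed

lemma GG_open: "op U \<Longrightarrow> op (GG U ns)"
proof -
  assume U: "op U"
  show ?thesis unfolding openin_subopen[of _ "GG U ns"]
  proof
    fix x assume "x \<in> GG U ns"
    then have x: "x \<in> X" and "\<exists>k>0. \<forall>i<length ns. \<exists>b>0. (f ^^ b) x \<in> U \<and> (f ^^ (b + k * Suc i + ns ! i)) x \<in> U"
      unfolding GG_def by blast+
    then obtain k where k: "k > 0" "\<forall>i<length ns. \<exists>b>0. (f ^^ b) x \<in> U \<and> (f ^^ (b + k * Suc i + ns ! i)) x \<in> U"
      by blast
    have "\<exists>bs. \<forall>i. i < length ns \<longrightarrow> bs i > 0 \<and> (f ^^ bs i) x \<in> U \<and> (f ^^ (bs i + k * Suc i + ns ! i)) x \<in> U"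
      by (rule choice) (use k(2) in blast)
    then obtain bs where bs: "\<forall>i<length ns. bs i > 0 \<and> (f ^^ bs i) x \<in> U \<and> (f ^^ (bs i + k * Suc i + ns ! i)) x \<in> U"
      by blast
    let ?S = "\<lambda>i. (X \<inter> (f ^^ bs i) -` U) \<inter> (X \<inter> (f ^^ (bs i + k * Suc i + ns ! i)) -` U)"
    let ?T = "X \<inter> (\<Inter>i\<in>{..<length ns}. ?S i)"
    have "\<forall>i<length ns. op (?S i)" using pre_open[OF U] by (blast intro: openin_Int)
    then have oT: "op ?T" by (rule fin_int)
    have xT: "x \<in> ?T" using x bs by auto
    have "?T \<subseteq> GG U ns"
    proof
      fix z assume z: "z \<in> ?T"
      then have "z \<in> X" by blast
      moreover have "\<forall>i<length ns. \<exists>b>0. (f ^^ b) z \<in> U \<and> (f ^^ (b + k * Suc i + ns ! i)) z \<in> U"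
      proof (intro allI impI)
        fix i assume "i < length ns"
        then have "z \<in> ?S i" using z by blast
        then show "\<exists>b>0. (f ^^ b) z \<in> U \<and> (f ^^ (b + k * Suc i + ns ! i)) z \<in> U"
          using bs \<open>i < length ns\<close> by blast
      qed
      ultimately show "z \<in> GG U ns" unfolding GG_def using k(1) by blast
    qed
    with oT xT show "\<exists>T. op T \<and> x \<in> T \<and> T \<subseteq> GG U ns" by blast
  qed
qed

lemma GG_dense:
  assumes F: "fam_transitive Finf (top_of_set X) f" and U: "op U" "U \<noteq> {}" and Om: "op Om" "Om \<noteq> {}"
  shows "GG U ns \<inter> Om \<noteq> {}"
proof -
  have H: HH using Finf_HH[OF F] .
  have "hitset (top_of_set X) f U U \<in> Finf" using FtD[OF F U U] .
  from this[unfolded Finf_iff, THEN spec[of _ ns]]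
  obtain k where k: "k > 0" "\<forall>i<length ns. k * Suc i + ns ! i \<in> hitset (top_of_set X) f U U"
    by blast
  let ?A = "\<lambda>i. U \<inter> (f ^^ (k * Suc i + ns ! i)) -` U"
  have "\<forall>i<length ns. op (?A i) \<and> ?A i \<noteq> {}"
  proof (intro allI impI conjI)
    fix i assume "i < length ns"
    show "op (?A i)" using pre_open2[OF U(1) U(1)] .
    show "?A i \<noteq> {}" using k(2) \<open>i < length ns\<close> unfolding hitset_mem by blast
  qed
  from chain[OF H Om this, of "\<lambda>_. 1"]
  obtain W p where W: "op W" "W \<noteq> {}" "W \<subseteq> Om" "\<forall>i<length ns. 1 \<le> p i \<and> W \<subseteq> (f ^^ p i) -` ?A i"
    by blast
  from W(2) obtain w where w: "w \<in> W" by blast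
  have wX: "w \<in> X" using op_sub[OF W(1)] w by blast
  have "\<forall>i<length ns. \<exists>b>0. (f ^^ b) w \<in> U \<and> (f ^^ (b + k * Suc i + ns ! i)) w \<in> U"
  proof (intro allI impI)
    fix i assume i: "i < length ns"
    then have pi: "p i > 0" "(f ^^ p i) w \<in> ?A i" using W(4) w by auto
    have "(f ^^ (k * Suc i + ns ! i)) ((f ^^ p i) w) = (f ^^ (p i + k * Suc i + ns ! i)) w"
      unfolding funpow_comp_apply by (simp add: ac_simps)
    with pi show "\<exists>b>0. (f ^^ b) w \<in> U \<and> (f ^^ (b + k * Suc i + ns ! i)) w \<in> U"
      by (intro exI[of _ "p i"]) auto
  qed
  then have "w \<in> GG U ns" unfolding GG_def using wX k(1) by blast
  then show ?thesis using w W(3) by blast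
qed

end

context dsys begin

lemma Finf_pt:
  assumes cX: "compact X" and ne: "X \<noteq> {}" and F: "fam_transitive Finf (top_of_set X) f"
  shows "fam_point_transitive (nabla Finf) (top_of_set X) f"
proof -
  obtain Bs where Bs: "countable Bs" "\<forall>B\<in>Bs. op B \<and> B \<noteq> {}"
    "\<forall>U. op U \<and> U \<noteq> {} \<longrightarrow> (\<exists>B\<in>Bs. B \<subseteq> U)"
    using compact_base[OF cX] by blast
  let ?G = "(\<lambda>(U,ns). GG U ns) ` (Bs \<times> (UNIV :: nat list set))"
  have cG: "countable ?G" by (intro countable_image countable_SIGMA) (auto simp: Bs(1))
  have cs: "compact_space (top_of_set X)"
    by (metis cX compactin_euclidean_iff compact_space_subtopology)
  have reg: "locally_compact_space (top_of_set X) \<and> regular_space (top_of_set X)"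
    using compact_imp_locally_compact_space[OF cs]
      metrizable_imp_regular_space[OF metrizable_space_subtopology[OF metrizable_space_euclidean]]
    by blast
  have dense: "openin (top_of_set X) T \<and> (top_of_set X) closure_of T = topspace (top_of_set X)"
    if "T \<in> ?G" for T
  proof -
    from that obtain U ns where Uns: "U \<in> Bs" "T = GG U ns" by auto
    have U: "op U" "U \<noteq> {}" using Bs(2) Uns(1) by auto
    have "op T" unfolding Uns(2) by (rule GG_open[OF U(1)])
    moreover have "(top_of_set X) closure_of T = topspace (top_of_set X)"
      unfolding dense_intersects_open
    proof (intro allI impI)
      fix T' assume "op T' \<and> T' \<noteq> {}"
      then show "T \<inter> T' \<noteq> {}" unfolding Uns(2) using GG_dense[OF F U] by blast
    qed
    ultimately show ?thesis by blast
  qed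
  have cl: "(top_of_set X) closure_of \<Inter>?G = topspace (top_of_set X)"
    by (rule Baire_category[OF disjI2[OF reg] cG dense])
  have "X \<inter> \<Inter>?G \<noteq> {}"
  proof
    assume "X \<inter> \<Inter>?G = {}"
    then have "(top_of_set X) closure_of \<Inter>?G = {}"
      using closure_of_restrict[of "top_of_set X" "\<Inter>?G"] by simp
    with cl ne show False by simp
  qed
  then obtain x where x: "x \<in> X" "x \<in> \<Inter>?G" by blast
  have xG: "x \<in> GG B ns" if "B \<in> Bs" for B ns
  proof -
    have "GG B ns \<in> ?G" by (rule image_eqI[where x="(B,ns)"]) (use that in auto)
    then show ?thesis using x(2) by blast
  qed
  have main: "diffset (visitset f x U) \<in> Finf" if U: "op U" "U \<noteq> {}" for U
  proof -
    obtain B where B: "B \<in> Bs" "B \<subseteq> U" using Bs(3) U by blast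
    have "diffset (visitset f x B) \<in> Finf"
      unfolding Finf_iff
    proof
      fix ns :: "nat list"
      have "x \<in> GG B ns" using xG[OF B(1)] .
      then obtain k where k: "k > 0"
        "\<forall>i<length ns. \<exists>b>0. (f ^^ b) x \<in> B \<and> (f ^^ (b + k * Suc i + ns ! i)) x \<in> B"
        unfolding GG_def by blast
      have "\<forall>i<length ns. k * Suc i + ns ! i \<in> diffset (visitset f x B)"
      proof (intro allI impI)
        fix i assume "i < length ns"
        with k(2) obtain b where b: "b > 0" "(f ^^ b) x \<in> B" "(f ^^ (b + k * Suc i + ns ! i)) x \<in> B"
          by blast
        have "b \<in> visitset f x B" using b unfolding visit_mem by blast
        moreover have "b + k * Suc i + ns ! i \<in> visitset f x B" using b unfolding visit_mem by simp
        moreover have "k * Suc i + ns ! i = (b + k * Suc i + ns ! i) - b" by simp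
        moreover have "b + k * Suc i + ns ! i > b" using k(1) by simp
        ultimately show "k * Suc i + ns ! i \<in> diffset (visitset f x B)"
          unfolding diff_mem by blast
      qed
      with k(1) show "\<exists>k>0. \<forall>i<length ns. k * Suc i + ns ! i \<in> diffset (visitset f x B)" by blast
    qed
    then show ?thesis
      by (rule Finf_mono) (intro diffset_mono visitset_mono B(2))
  qed
  show ?thesis
    unfolding fam_point_transitive_def nabla_def topspace_euclidean_subtopology
    using x(1) main by blast
qed

end

theorem theorem4p9:
  fixes X :: "'a::metric_space set" and f :: "'a \<Rightarrow> 'a"
  assumes "compact X" and "X \<noteq> {}" and "continuous_on X f" and "f ` X \<subseteq> X"
  shows "(multi_transitive (top_of_set X) f \<longleftrightarrow> fam_transitive Finf (top_of_set X) f)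
       \<and> (fam_transitive Finf (top_of_set X) f
            \<longleftrightarrow> fam_point_transitive (nabla Finf) (top_of_set X) f)"
proof -
  interpret dsys X f using assms(3,4) by unfold_locales
  have 1: "multi_transitive (top_of_set X) f \<longleftrightarrow> fam_transitive Finf (top_of_set X) f"
    using multi_MT MT_Finf Finf_MT MT_multi by blast
  have 2: "fam_transitive Finf (top_of_set X) f \<longleftrightarrow> fam_point_transitive (nabla Finf) (top_of_set X) f"
    using Finf_pt[OF assms(1,2)] pt_Finf by blast
  show ?thesis using 1 2 by blast
qed

end
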